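(* Let $M\ge0$ and $\kappa\ge1$ be integers. Let $x(t)=\sum_{\gamma\in F}q_\gamma(t)e^{2\pi i\gamma t}$, $t\in\mathbb R$, where $F$ is a finite subset of $[0,1)$ of cardinality $\kappa$ and each $q_\gamma$ is a non-zero complex polynomial of degree at most $M$. Then $x$ can be completely recovered from its values $x(\ell)$, $\ell=0,1,\dots,2\kappa(M+1)-1$; that is, if $\tilde x(t)=\sum_{\gamma\in\tilde F}\tilde q_\gamma(t)e^{2\pi i\gamma t}$ is another function of the same form (with $\tilde F\subseteq[0,1)$ of cardinality $\kappa$ and non-zero polynomials $\tilde q_\gamma$ of degree at most $M$) with $\tilde x(\ell)=x(\ell)$ for $\ell=0,\dots,2\kappa(M+1)-1$, then $\tilde F=F$ and $\tilde q_\gamma=q_\gamma$ for all $\gamma\in F$. *)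

theory Defs
  imports "HOL-Analysis.Analysis" "HOL-Computational_Algebra.Polynomial"
begin

definition exp_poly_sum :: "real set \<Rightarrow> (real \<Rightarrow> complex poly) \<Rightarrow> real \<Rightarrow> complex" where
  "exp_poly_sum F q t = (\<Sum>\<gamma>\<in>F. poly (q \<gamma>) (complex_of_real t) * exp (2 * of_real pi * \<i> * of_real \<gamma> * of_real t))"

definition admissible :: "nat \<Rightarrow> nat \<Rightarrow> real set \<Rightarrow> (real \<Rightarrow> complex poly) \<Rightarrow> bool" where
  "admissible M \<kappa> F q \<longleftrightarrow> finite F \<and> card F = \<kappa> \<and> F \<subseteq> {0..<1} \<and>
     (\<forall>\<gamma>\<in>F. q \<gamma> \<noteq> 0 \<and> degree (q \<gamma>) \<le> M)"

end

theory Submission imports Defs begin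

lemma shift_deg:
  fixes p :: "complex poly"
  shows "pcompose p [:1,1:] - p = 0 \<or> degree (pcompose p [:1,1:] - p) < degree p"
proof (cases "degree p = 0")
  case True
  then obtain a where "p = [:a:]" by (rule degree_eq_zeroE)
  then show ?thesis by simp
next
  case False
  have d: "degree (pcompose p [:1,1:]) = degree p" by (simp add: degree_pcompose)
  have l: "lead_coeff (pcompose p [:1,1:]) = lead_coeff p" by (simp add: lead_coeff_comp)
  have le: "degree (pcompose p [:1,1:] - p) \<le> degree p"
    using degree_diff_le[of "pcompose p [:1,1:]" "degree p" p] d by simp
  have c: "coeff (pcompose p [:1,1:] - p) (degree p) = 0" using l d by simp
  show ?thesis
  proof (cases "pcompose p [:1,1:] - p = 0")
    case nz: False
    have "degree (pcompose p [:1,1:] - p) \<noteq> degree p"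
      using c nz by (metis leading_coeff_0_iff)
    then show ?thesis using le by simp
  qed simp
qed

lemma periodic_const:
  fixes p :: "complex poly"
  assumes "pcompose p [:1,1:] = p"
  shows "\<exists>c. p = [:c:]"
proof -
  have step: "poly p (of_nat (Suc l)) = poly p (of_nat l)" for l
  proof -
    have "poly p (of_nat l) = poly (pcompose p [:1,1:]) (of_nat l)" using assms by simp
    also have "\<dots> = poly p (of_nat (Suc l))" by (simp add: poly_pcompose add.commute)
    finally show ?thesis by simp
  qed
  have all: "poly p (of_nat l) = poly p 0" for l
    by (induction l) (use step in auto)
  let ?r = "p - [:poly p 0:]"
  have "range (of_nat :: nat \<Rightarrow> complex) \<subseteq> {x. poly ?r x = 0}" using all by auto
  moreover have "infinite (range (of_nat :: nat \<Rightarrow> complex))"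
    using range_inj_infinite[of "of_nat :: nat \<Rightarrow> complex"] inj_of_nat by blast
  ultimately have "infinite {x. poly ?r x = 0}" using finite_subset by blast
  then have "?r = 0" using poly_roots_finite by blast
  then show ?thesis by auto
qed


lemma key:
  fixes G :: "'a set" and e :: "'a \<Rightarrow> complex"
  assumes fin: "finite G" and inj: "inj_on e G" and nz: "\<forall>g\<in>G. e g \<noteq> 0"
  shows "(\<forall>g\<in>G. p g = 0 \<or> degree (p g) < d g) \<Longrightarrow> sum d G = n \<Longrightarrow>
    (\<forall>l<n. (\<Sum>g\<in>G. poly (p g) (of_nat l) * e g ^ l) = 0) \<Longrightarrow> \<forall>g\<in>G. p g = 0"
proof (induction n arbitrary: p d)
  case 0
  then show ?case using fin by auto
next
  case (Suc m)
  have "sum d G \<noteq> 0" using Suc.prems by simp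
  then obtain g0 where g0: "g0 \<in> G" "d g0 > 0" by (metis gr0I sum.neutral)
  define w where "w = e g0"
  define p' where "p' g = smult (e g) (pcompose (p g) [:1,1:]) - smult w (p g)" for g
  define d' where "d' = d(g0 := d g0 - 1)"
  have sd': "sum d' G = m"
  proof -
    have "sum d G = d g0 + sum d (G - {g0})" using fin g0 by (simp add: sum.remove)
    moreover have "sum d' G = d' g0 + sum d' (G - {g0})" using fin g0 by (simp add: sum.remove)
    moreover have "sum d' (G - {g0}) = sum d (G - {g0})" unfolding d'_def by (rule sum.cong) auto
    ultimately show ?thesis using Suc.prems g0 unfolding d'_def by simp
  qed
  have deg': "\<forall>g\<in>G. p' g = 0 \<or> degree (p' g) < d' g"
  proof
    fix g assume gG: "g \<in> G"
    show "p' g = 0 \<or> degree (p' g) < d' g"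
    proof (cases "g = g0")
      case True
      have pe: "p' g = smult w (pcompose (p g) [:1,1:] - p g)"
        unfolding p'_def w_def True by (simp add: smult_diff_right)
      let ?r = "pcompose (p g) [:1,1:] - p g"
      show ?thesis
      proof (cases "?r = 0")
        case True then show ?thesis using pe by simp
      next
        case False
        then have lt: "degree ?r < degree (p g)" using shift_deg[of "p g"] by blast
        have "p g \<noteq> 0" using False by auto
        then have "degree (p g) < d g" using Suc.prems(1) gG by blast
        moreover have "degree (p' g) \<le> degree ?r" using pe degree_smult_le by simp
        ultimately have "degree (p' g) < d g - 1" using lt by linarith
        then show ?thesis unfolding d'_def using True by simp
      qed
    next
      case False
      have "degree (p' g) \<le> degree (p g)"
      proof -
        have a: "degree (smult (e g) (pcompose (p g) [:1,1:])) \<le> degree (p g)"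
          using degree_smult_le[of "e g" "pcompose (p g) [:1,1:]"] by (simp add: degree_pcompose)
        have b: "degree (smult w (p g)) \<le> degree (p g)" by (rule degree_smult_le)
        show ?thesis using degree_diff_le[OF a b] unfolding p'_def .
      qed
      moreover have "p g = 0 \<Longrightarrow> p' g = 0" unfolding p'_def by simp
      ultimately show ?thesis using Suc.prems(1) gG False unfolding d'_def by fastforce
    qed
  qed
  have samp': "\<forall>l<m. (\<Sum>g\<in>G. poly (p' g) (of_nat l) * e g ^ l) = 0"
  proof (intro allI impI)
    fix l assume l: "l < m"
    have "(\<Sum>g\<in>G. poly (p' g) (of_nat l) * e g ^ l)
       = (\<Sum>g\<in>G. poly (p g) (of_nat (Suc l)) * e g ^ (Suc l) - w * (poly (p g) (of_nat l) * e g ^ l))"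
      unfolding p'_def by (rule sum.cong) (auto simp: poly_pcompose algebra_simps)
    also have "\<dots> = (\<Sum>g\<in>G. poly (p g) (of_nat (Suc l)) * e g ^ (Suc l)) - w * (\<Sum>g\<in>G. poly (p g) (of_nat l) * e g ^ l)"
      by (simp add: sum_subtractf sum_distrib_left)
    also have "\<dots> = 0" using Suc.prems(3)[rule_format, of "Suc l"] Suc.prems(3)[rule_format, of l] l
      by (simp del: of_nat_Suc power_Suc)
    finally show "(\<Sum>g\<in>G. poly (p' g) (of_nat l) * e g ^ l) = 0" .
  qed
  have z: "\<forall>g\<in>G. p' g = 0" using Suc.IH[OF deg' sd' samp'] .
  have others: "p g = 0" if gG: "g \<in> G" "g \<noteq> g0" for g
  proof (rule ccontr)
    assume pnz: "p g \<noteq> 0"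
    have "smult (e g) (pcompose (p g) [:1,1:]) = smult w (p g)" using z gG unfolding p'_def by simp
    then have "coeff (smult (e g) (pcompose (p g) [:1,1:])) (degree (p g)) = coeff (smult w (p g)) (degree (p g))"
      by simp
    moreover have "coeff (pcompose (p g) [:1,1:]) (degree (p g)) = lead_coeff (p g)"
    proof (cases "degree (p g) = 0")
      case True then obtain a where "p g = [:a:]" by (rule degree_eq_zeroE)
      then show ?thesis by simp
    next
      case False
      then show ?thesis using lead_coeff_comp[of "[:1,1:]" "p g"] by (simp add: degree_pcompose)
    qed
    ultimately have "e g * lead_coeff (p g) = w * lead_coeff (p g)" by simp
    then have "e g = w" using pnz by simp
    then show False using inj gG g0 unfolding w_def inj_on_def by blast
  qed
  have "pcompose (p g0) [:1,1:] = p g0"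
  proof -
    have "smult (e g0) (pcompose (p g0) [:1,1:]) = smult (e g0) (p g0)"
      using z g0 unfolding p'_def w_def by simp
    then show ?thesis using nz g0 by (metis eq_iff_diff_eq_0 smult_diff_right smult_eq_0_iff)
  qed
  then obtain c where c: "p g0 = [:c:]" using periodic_const by blast
  have "(\<Sum>g\<in>G. poly (p g) (of_nat 0) * e g ^ 0) = 0" using Suc.prems(3)[rule_format, of 0] by simp
  moreover have "(\<Sum>g\<in>G. poly (p g) (of_nat 0) * e g ^ 0) = poly (p g0) 0"
    using fin g0 others by (simp add: sum.remove)
  ultimately have "p g0 = 0" using c by simp
  then show ?case using others by blast
qed


definition ee :: "real \<Rightarrow> complex" where
  "ee \<gamma> = exp (2 * of_real pi * \<i> * of_real \<gamma>)"

lemma ee_inj: "inj_on ee {0..<1}"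
proof (rule inj_onI)
  fix a b assume a: "a \<in> {0..<1}" and b: "b \<in> {0..<1}" and eq: "ee a = ee b"
  then obtain n :: int where n: "2 * of_real pi * \<i> * of_real a = 2 * of_real pi * \<i> * of_real b + complex_of_real (real_of_int (2 * n) * pi) * \<i>"
    unfolding ee_def exp_eq by blast
  have "complex_of_real (2 * pi * a) * \<i> = complex_of_real (2 * pi * (b + real_of_int n)) * \<i>"
    using n by (simp add: algebra_simps)
  then have "complex_of_real a = complex_of_real (b + real_of_int n)" by simp
  then have "a = b + real_of_int n" using of_real_eq_iff by blast
  moreover have "\<bar>real_of_int n\<bar> < 1" using a b calculation by auto
  ultimately show "a = b" by simp
qed

lemma ee_pow: "exp (2 * of_real pi * \<i> * of_real \<gamma> * of_real (real l)) = ee \<gamma> ^ l"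
  unfolding ee_def by (metis exp_of_nat_mult mult.commute of_real_of_nat_eq)


theorem corollary3p1:
  fixes M \<kappa> :: nat and F F' :: "real set" and q q' :: "real \<Rightarrow> complex poly"
  assumes "\<kappa> \<ge> 1"
    and "admissible M \<kappa> F q"
    and "admissible M \<kappa> F' q'"
    and "\<forall>l::nat. l < 2 * \<kappa> * (M + 1) \<longrightarrow> exp_poly_sum F' q' (real l) = exp_poly_sum F q (real l)"
  shows "F' = F \<and> (\<forall>\<gamma>\<in>F. q' \<gamma> = q \<gamma>)"
proof -
  note A = assms(2,3)[unfolded admissible_def]
  define G where "G = F \<union> F'"
  have finG: "finite G" using A unfolding G_def by auto
  have GS: "G \<subseteq> {0..<1}" using A unfolding G_def by auto
  have injG: "inj_on ee G" using ee_inj GS inj_on_subset by blast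
  have nzG: "\<forall>g\<in>G. ee g \<noteq> 0" unfolding ee_def by simp
  define r where "r \<gamma> = (if \<gamma> \<in> F' then q' \<gamma> else 0) - (if \<gamma> \<in> F then q \<gamma> else 0)" for \<gamma>
  define d where "d = (\<lambda>_::real. M + 1)"
  have deg: "\<forall>g\<in>G. r g = 0 \<or> degree (r g) < d g"
  proof
    fix g assume "g \<in> G"
    have a: "degree (if g \<in> F' then q' g else 0) \<le> M" using A by auto
    have b: "degree (if g \<in> F then q g else 0) \<le> M" using A by auto
    show "r g = 0 \<or> degree (r g) < d g" using degree_diff_le[OF a b] unfolding r_def d_def by simp
  qed
  have cardG: "card G \<le> 2 * \<kappa>" using A card_Un_le[of F F'] unfolding G_def by simp
  have samp: "\<forall>l<sum d G. (\<Sum>g\<in>G. poly (r g) (of_nat l) * ee g ^ l) = 0"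
  proof (intro allI impI)
    fix l assume "l < sum d G"
    moreover have "sum d G = card G * (M + 1)" unfolding d_def by simp
    moreover have "card G * (M + 1) \<le> 2 * \<kappa> * (M + 1)" using cardG by (rule mult_le_mono1)
    ultimately have "l < 2 * \<kappa> * (M + 1)" by linarith
    then have eq: "exp_poly_sum F' q' (real l) = exp_poly_sum F q (real l)" using assms(4) by blast
    have s1: "(\<Sum>g\<in>G. poly (if g \<in> F' then q' g else 0) (of_nat l) * ee g ^ l) = exp_poly_sum F' q' (real l)"
    proof -
      have "(\<Sum>g\<in>G. poly (if g \<in> F' then q' g else 0) (of_nat l) * ee g ^ l)
          = (\<Sum>g\<in>G. if g \<in> F' then poly (q' g) (of_nat l) * ee g ^ l else 0)"
        by (rule sum.cong) auto
      also have "\<dots> = (\<Sum>g\<in>G \<inter> F'. poly (q' g) (of_nat l) * ee g ^ l)"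
        by (rule sum.inter_restrict[OF finG, symmetric])
      also have "G \<inter> F' = F'" unfolding G_def by auto
      finally show ?thesis unfolding exp_poly_sum_def ee_pow by simp
    qed
    have s2: "(\<Sum>g\<in>G. poly (if g \<in> F then q g else 0) (of_nat l) * ee g ^ l) = exp_poly_sum F q (real l)"
    proof -
      have "(\<Sum>g\<in>G. poly (if g \<in> F then q g else 0) (of_nat l) * ee g ^ l)
          = (\<Sum>g\<in>G. if g \<in> F then poly (q g) (of_nat l) * ee g ^ l else 0)"
        by (rule sum.cong) auto
      also have "\<dots> = (\<Sum>g\<in>G \<inter> F. poly (q g) (of_nat l) * ee g ^ l)"
        by (rule sum.inter_restrict[OF finG, symmetric])
      also have "G \<inter> F = F" unfolding G_def by auto
      finally show ?thesis unfolding exp_poly_sum_def ee_pow by simp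
    qed
    have "(\<Sum>g\<in>G. poly (r g) (of_nat l) * ee g ^ l)
       = (\<Sum>g\<in>G. poly (if g \<in> F' then q' g else 0) (of_nat l) * ee g ^ l)
         - (\<Sum>g\<in>G. poly (if g \<in> F then q g else 0) (of_nat l) * ee g ^ l)"
      unfolding r_def by (simp add: sum_subtractf[symmetric] algebra_simps)
    then show "(\<Sum>g\<in>G. poly (r g) (of_nat l) * ee g ^ l) = 0" using s1 s2 eq by simp
  qed
  have r0: "\<forall>g\<in>G. r g = 0" using key[OF finG injG nzG deg refl samp] .
  have sub: "F \<subseteq> F'"
  proof
    fix g assume gF: "g \<in> F"
    show "g \<in> F'"
    proof (rule ccontr)
      assume "g \<notin> F'"
      then have "r g = - q g" unfolding r_def using gF by simp
      then show False using r0 gF A unfolding G_def by auto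
    qed
  qed
  have FF: "F' = F" using card_subset_eq[OF _ sub] A by simp
  moreover have "\<forall>\<gamma>\<in>F. q' \<gamma> = q \<gamma>"
    using r0 FF unfolding r_def G_def by auto
  ultimately show ?thesis by simp
qed

end
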